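(* Let $G=(X,b,m,c)$ be a weighted graph with $c=0$ on $X$, and let $p\in(1,\infty)$. Assume that $G$ is $p$-parabolic and let $K\subseteq X$ be a finite non-empty set. Then there exists a function $\kappa\colon X\to[0,\infty)$ such that (a) $\kappa\in D^p$; (b) $\kappa$ is $p$-superharmonic on $X\setminus K$ (i.e. $\kappa\in F^p(X\setminus K)$ and $\Delta_p\kappa\ge 0$ on $X\setminus K$) and $\kappa=0$ on $K$; (c) $\kappa(x)\to\infty$ as $x\to\infty$, i.e. for every $M>0$ there is a finite set $F\subseteq X$ with $\kappa>M$ on $X\setminus F$.
   Context: A weighted graph $G=(X,b,m,c)$ consists of a countably infinite set $X$, a symmetric function $b\colon X\times X\to[0,\infty)$ with $b(x,x)=0$ and $\sum_{y\in X}b(x,y)<\infty$ for all $x$, a function $m\colon X\to(0,\infty)$ and a potential $c\colon X\to[0,\infty)$. Write $x\sim y$ if $b(x,y)>0$; $X$ is assumed connected (any two vertices are joined by a finite path $x=x_0\sim x_1\sim\dots\sim x_n=y$). For $p\in[1,\infty)$ and $f\colon X\to\mathbb{R}$, $\mathcal{E}_p(f)=\frac12\sum_{x,y\in X}b(x,y)|f(x)-f(y)|^p+\sum_{x\in X}c(x)|f(x)|^p$, and $D^p=\{f:\mathcal{E}_p(f)<\infty\}$. $C_c(X)$ denotes finitely supported functions. For finite $K\subseteq X$, $\mathrm{cap}_p(K)=\inf\{\mathcal{E}_p(\varphi):\varphi\in C_c(X),\ \varphi\ge1 \text{ on } K\}$; the graph is $p$-parabolic if $\mathrm{cap}_p(K)=0$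 for every finite $K$, and $p$-hyperbolic otherwise. For $a\in\mathbb{R}$ put $a^{\langle p-1\rangle}=|a|^{p-2}a$ (and $0^{\langle p-1\rangle}=0$). For $V\subseteq X$, $F^p(V)=\{f\colon X\to\mathbb{R}:\sum_{y}b(x,y)|f(x)-f(y)|^{p-1}<\infty\ \forall x\in V\}$, and for $f\in F^p(V)$, $x\in V$: $\Delta_pf(x)=\frac1{m(x)}\sum_{y\in X}b(x,y)(f(x)-f(y))^{\langle p-1\rangle}$. *)

theory Defs
  imports "HOL-Analysis.Analysis"
begin

text \<open>Weighted graph (X,b,m,c) with vertex set the whole type 'a.\<close>
definition weighted_graph ::
  "('a \<Rightarrow> 'a \<Rightarrow> real) \<Rightarrow> ('a \<Rightarrow> real) \<Rightarrow> ('a \<Rightarrow> real) \<Rightarrow> bool" where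
  "weighted_graph b m c \<longleftrightarrow>
     countable (UNIV :: 'a set) \<and> infinite (UNIV :: 'a set) \<and>
     (\<forall>x y. b x y \<ge> 0) \<and> (\<forall>x y. b x y = b y x) \<and> (\<forall>x. b x x = 0) \<and>
     (\<forall>x. (\<lambda>y. b x y) summable_on UNIV) \<and>
     (\<forall>x. m x > 0) \<and> (\<forall>x. c x \<ge> 0) \<and>
     (\<forall>x y. (x, y) \<in> {(u, v). b u v > 0}\<^sup>*)"

definition energy_summands ::
  "('a \<Rightarrow> 'a \<Rightarrow> real) \<Rightarrow> real \<Rightarrow> ('a \<Rightarrow> real) \<Rightarrow> 'a \<times> 'a \<Rightarrow> real" where
  "energy_summands b p f = (\<lambda>(x, y). b x y * \<bar>f x - f y\<bar> powr p)"

definition in_Dp ::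
  "('a \<Rightarrow> 'a \<Rightarrow> real) \<Rightarrow> ('a \<Rightarrow> real) \<Rightarrow> real \<Rightarrow> ('a \<Rightarrow> real) \<Rightarrow> bool" where
  "in_Dp b c p f \<longleftrightarrow> energy_summands b p f summable_on UNIV \<and>
     (\<lambda>x. c x * \<bar>f x\<bar> powr p) summable_on UNIV"

definition energy ::
  "('a \<Rightarrow> 'a \<Rightarrow> real) \<Rightarrow> ('a \<Rightarrow> real) \<Rightarrow> real \<Rightarrow> ('a \<Rightarrow> real) \<Rightarrow> real" where
  "energy b c p f = (1/2) * infsum (energy_summands b p f) UNIV +
     infsum (\<lambda>x. c x * \<bar>f x\<bar> powr p) UNIV"

definition capacity ::
  "('a \<Rightarrow> 'a \<Rightarrow> real) \<Rightarrow> ('a \<Rightarrow> real) \<Rightarrow> real \<Rightarrow> 'a set \<Rightarrow> real" where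
  "capacity b c p K = Inf {energy b c p \<phi> | \<phi>. finite {x. \<phi> x \<noteq> 0} \<and> (\<forall>x\<in>K. \<phi> x \<ge> 1)}"

definition p_parabolic ::
  "('a \<Rightarrow> 'a \<Rightarrow> real) \<Rightarrow> ('a \<Rightarrow> real) \<Rightarrow> real \<Rightarrow> bool" where
  "p_parabolic b c p \<longleftrightarrow> (\<forall>K. finite K \<longrightarrow> capacity b c p K = 0)"

definition spow :: "real \<Rightarrow> real \<Rightarrow> real" where
  "spow p a = (if a = 0 then 0 else \<bar>a\<bar> powr (p - 2) * a)"

definition in_Fp ::
  "('a \<Rightarrow> 'a \<Rightarrow> real) \<Rightarrow> real \<Rightarrow> 'a set \<Rightarrow> ('a \<Rightarrow> real) \<Rightarrow> bool" where
  "in_Fp b p V f \<longleftrightarrow> (\<forall>x\<in>V. (\<lambda>y. b x y * \<bar>f x - f y\<bar> powr (p - 1)) summable_on UNIV)"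

definition p_laplacian ::
  "('a \<Rightarrow> 'a \<Rightarrow> real) \<Rightarrow> ('a \<Rightarrow> real) \<Rightarrow> real \<Rightarrow> ('a \<Rightarrow> real) \<Rightarrow> 'a \<Rightarrow> real" where
  "p_laplacian b m p f x = (1 / m x) * infsum (\<lambda>y. b x y * spow p (f x - f y)) UNIV"

definition p_superharmonic_on ::
  "('a \<Rightarrow> 'a \<Rightarrow> real) \<Rightarrow> ('a \<Rightarrow> real) \<Rightarrow> real \<Rightarrow> 'a set \<Rightarrow> ('a \<Rightarrow> real) \<Rightarrow> bool" where
  "p_superharmonic_on b m p V f \<longleftrightarrow> in_Fp b p V f \<and> (\<forall>x\<in>V. p_laplacian b m p f x \<ge> 0)"

end

theory Submission
  imports Defs "HOL-Library.Diagonal_Subsequence"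
begin


lemma spow_pos: "a > 0 \<Longrightarrow> spow p a = a powr (p - 1)"
proof -
  assume a: "a > 0"
  have "a powr (p - 2) * a powr 1 = a powr (p - 1)" by (simp only: powr_add[symmetric]) simp
  moreover have "a powr 1 = a" using a by simp
  ultimately show ?thesis using a by (simp add: spow_def)
qed

lemma spow_neg: "spow p (-a) = - spow p a"
  by (simp add: spow_def)

lemma abs_spow: "\<bar>spow p a\<bar> = \<bar>a\<bar> powr (p - 1)"
proof (cases "a = 0")
  case True then show ?thesis by (simp add: spow_def)
next
  case False
  then have "\<bar>a\<bar> > 0" by simp
  then show ?thesis using spow_pos[of "\<bar>a\<bar>" p] False
    by (cases "a > 0") (auto simp: spow_def abs_mult)
qed

lemma tangent_pos:
  fixes a s p :: real
  assumes p: "p > 1" and a: "a > 0"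
  shows "\<bar>s\<bar> powr p \<ge> a powr p + p * a powr (p - 1) * (s - a)"
proof -
  define q where "q = p / (p - 1)"
  have q1: "q > 1" using p by (simp add: q_def)
  have pq: "1/p + 1/q = 1" using p by (simp add: q_def field_simps)
  have Y: "\<bar>s\<bar> * a powr (p - 1) \<le> \<bar>s\<bar> powr p / p + (a powr (p - 1)) powr q / q"
    by (rule Youngs_inequality) (use p q1 pq in auto)
  have "(a powr (p - 1)) powr q = a powr p" using p by (simp add: powr_powr q_def)
  moreover have "1 / q = (p - 1) / p" using p by (simp add: q_def)
  moreover have "\<And>x. x / q = x * (p - 1) / p" using p by (simp add: q_def)
  ultimately have Y2: "\<bar>s\<bar> * a powr (p - 1) \<le> \<bar>s\<bar> powr p / p + a powr p * (p - 1) / p"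
    using Y by simp
  have "p * (\<bar>s\<bar> * a powr (p - 1)) \<le> \<bar>s\<bar> powr p + a powr p * (p - 1)"
    using Y2 p by (simp add: divide_simps mult.commute)
  moreover have "a powr p = a * a powr (p - 1)" using a by (simp add: powr_diff)
  moreover have "p * (s * a powr (p - 1)) \<le> p * (\<bar>s\<bar> * a powr (p - 1))"
    using p by (intro mult_left_mono mult_right_mono) auto
  ultimately have "p * (s * a powr (p - 1)) \<le> \<bar>s\<bar> powr p + a * a powr (p - 1) * (p - 1)"
    by (metis order_trans)
  moreover have "a powr p + p * a powr (p - 1) * (s - a) = p * (s * a powr (p - 1)) - a * a powr (p - 1) * (p - 1)"
    using \<open>a powr p = a * a powr (p - 1)\<close> by (simp add: algebra_simps)
  ultimately show ?thesis by linarith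
qed

lemma tangent:
  fixes a s p :: real
  assumes p: "p > 1"
  shows "\<bar>s\<bar> powr p \<ge> \<bar>a\<bar> powr p + p * spow p a * (s - a)"
proof -
  consider "a > 0" | "a = 0" | "a < 0" by linarith
  then show ?thesis
  proof cases
    case 1 then show ?thesis using tangent_pos[OF p 1, of s] spow_pos[OF 1, of p] by simp
  next
    case 2 then show ?thesis by (simp add: spow_def)
  next
    case 3
    have "\<bar>-s\<bar> powr p \<ge> (-a) powr p + p * (-a) powr (p - 1) * (-s - (-a))"
      using tangent_pos[OF p, of "-a" "-s"] 3 by simp
    moreover have "spow p a = - ((-a) powr (p - 1))" using spow_pos[of "-a" p] spow_neg[of p a] 3 by simp
    ultimately show ?thesis using 3 by (simp add: algebra_simps)
  qed
qed

lemma spow_mono: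
  assumes p: "p > 1" and "a \<le> c"
  shows "spow p a \<le> spow p c"
proof (cases "a = c")
  case False
  then have ac: "a < c" using assms by simp
  have 1: "\<bar>c\<bar> powr p \<ge> \<bar>a\<bar> powr p + p * spow p a * (c - a)" by (rule tangent[OF p])
  have 2: "\<bar>a\<bar> powr p \<ge> \<bar>c\<bar> powr p + p * spow p c * (a - c)" by (rule tangent[OF p])
  from 1 2 have "p * (c - a) * (spow p a - spow p c) \<le> 0" by (simp add: algebra_simps)
  then have "spow p a - spow p c \<le> 0" using p ac
    by (smt (verit) mult_pos_pos)
  then show ?thesis by simp
qed simp

lemma pow_diff_upper:
  assumes p: "p > 1"
  shows "\<bar>d + t\<bar> powr p - \<bar>d\<bar> powr p \<le> p * t * spow p (d + t)"
  using tangent[OF p, of "d + t" d] by (simp add: algebra_simps)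

lemma pow_diff_lower:
  assumes p: "p > 1"
  shows "\<bar>d + t\<bar> powr p - \<bar>d\<bar> powr p \<ge> p * t * spow p d"
  using tangent[OF p, of d "d + t"] by (simp add: algebra_simps)

lemma powr_bound1:
  fixes d t p :: real
  assumes p: "p > 1" and t: "0 \<le> t" "t \<le> 1" and e: "0 \<le> e" "e \<le> p"
  shows "\<bar>d + t\<bar> powr e \<le> 2 powr p * (1 + \<bar>d\<bar> powr p)"
proof -
  define M where "M = max 1 \<bar>d\<bar>"
  have M1: "M \<ge> 1" by (simp add: M_def)
  have "\<bar>d + t\<bar> \<le> 2 * M" using t unfolding M_def by linarith
  then have "\<bar>d + t\<bar> powr e \<le> (2 * M) powr e" using e by (simp add: powr_mono2)
  also have "\<dots> \<le> (2 * M) powr p" using M1 e by (intro powr_mono) auto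
  also have "\<dots> = 2 powr p * M powr p" using M1 by (simp add: powr_mult)
  also have "\<dots> \<le> 2 powr p * (1 + \<bar>d\<bar> powr p)" by (intro mult_left_mono) (simp_all add: M_def max_def)
  finally show ?thesis .
qed

lemma powr_bound2:
  fixes d p :: real
  assumes "p > 1"
  shows "\<bar>d\<bar> powr (p - 1) \<le> 1 + \<bar>d\<bar> powr p"
proof (cases "\<bar>d\<bar> \<le> 1")
  case True
  then have "\<bar>d\<bar> powr (p - 1) \<le> 1 powr (p - 1)" using assms by (intro powr_mono2) auto
  then have "\<bar>d\<bar> powr (p - 1) \<le> 1" by simp
  then show ?thesis by (smt (verit) powr_ge_zero)
next
  case False
  then have "\<bar>d\<bar> powr (p - 1) \<le> \<bar>d\<bar> powr p" by (intro powr_mono) auto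
  then show ?thesis by simp
qed

lemma spow_negv: "a < 0 \<Longrightarrow> spow p a = - ((- a) powr (p - 1))"
  using spow_pos[of "-a" p] spow_neg[of p a] by simp

lemma spow_cont_right:
  assumes p: "p > 1"
  shows "((\<lambda>t. spow p (a + t)) \<longlongrightarrow> spow p a) (at_right 0)"
proof -
  consider "a > 0" | "a = 0" | "a < 0" by linarith
  then show ?thesis
  proof cases
    case 1
    have ev: "\<forall>\<^sub>F t in at_right 0. spow p (a + t) = (a + t) powr (p - 1)"
      using eventually_at_right_less[of 0] by eventually_elim (use 1 in \<open>simp add: spow_pos\<close>)
    have "((\<lambda>t. (a + t) powr (p - 1)) \<longlongrightarrow> (a + 0) powr (p - 1)) (at_right 0)"
      using 1 by (intro tendsto_intros) auto
    then show ?thesis using 1 by (subst tendsto_cong[OF ev]) (simp add: spow_pos)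
  next
    case 2
    have ev: "\<forall>\<^sub>F t in at_right 0. spow p (a + t) = t powr (p - 1)"
      using eventually_at_right_less[of 0] by eventually_elim (use 2 in \<open>simp add: spow_pos\<close>)
    have "((\<lambda>t. t powr (p - 1)) \<longlongrightarrow> 0) (at_right 0)"
      using p by (intro tendsto_zero_powrI) (auto simp: eventually_at_right_less eventually_at_filter intro!: tendsto_intros)
    then show ?thesis using 2 by (subst tendsto_cong[OF ev]) (simp add: spow_def)
  next
    case 3
    have lt: "\<forall>\<^sub>F t in at_right 0. t < -a"
      using 3 unfolding eventually_at_right_field by (intro exI[of _ "-a"]) auto
    have ev: "\<forall>\<^sub>F t in at_right 0. spow p (a + t) = - ((- a - t) powr (p - 1))"
      using lt by eventually_elim (simp add: spow_negv)
    have "((\<lambda>t. - ((- a - t) powr (p - 1))) \<longlongrightarrow> - ((- a - 0) powr (p - 1))) (at_right 0)"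
      using 3 by (intro tendsto_intros) auto
    then show ?thesis using 3 by (subst tendsto_cong[OF ev]) (simp add: spow_negv)
  qed
qed



lemma has_sum_diff':
  fixes f g :: "'a \<Rightarrow> real"
  assumes "(f has_sum a) A" "(g has_sum c) A"
  shows "((\<lambda>x. f x - g x) has_sum (a - c)) A"
proof -
  have "((\<lambda>x. - g x) has_sum (- c)) A" by (subst has_sum_uminus) (simp add: assms)
  from has_sum_add[OF assms(1) this] show ?thesis by simp
qed

lemma summable_on_diff':
  fixes f g :: "'a \<Rightarrow> real"
  assumes "f summable_on A" "g summable_on A"
  shows "(\<lambda>x. f x - g x) summable_on A"
  using has_sum_diff'[OF has_sum_infsum[OF assms(1)] has_sum_infsum[OF assms(2)]]
  by (auto simp: summable_on_def)

lemma infsum_diff':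
  fixes f g :: "'a \<Rightarrow> real"
  assumes "f summable_on A" "g summable_on A"
  shows "infsum (\<lambda>x. f x - g x) A = infsum f A - infsum g A"
  by (rule infsumI, rule has_sum_diff') (use assms in auto)

lemma summable_dom:
  fixes f g :: "'a \<Rightarrow> real"
  assumes "f summable_on A" "\<And>x. x \<in> A \<Longrightarrow> \<bar>g x\<bar> \<le> f x"
  shows "g summable_on A"
proof -
  have "(\<lambda>x. norm (g x)) summable_on A"
    by (rule summable_on_comparison_test[OF assms(1)]) (use assms(2) in auto)
  then show ?thesis using summable_on_iff_abs_summable_on_real by blast
qed

lemma has_sum_row:
  fixes \<phi> :: "'b \<Rightarrow> real"
  shows "((\<lambda>(u, v). if u = x then \<phi> v else 0) has_sum s) UNIV \<longleftrightarrow> (\<phi> has_sum s) UNIV"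
proof -
  have "((\<lambda>(u, v). if u = x then \<phi> v else 0) has_sum s) UNIV \<longleftrightarrow>
        ((\<lambda>(u, v). if u = x then \<phi> v else 0) has_sum s) (Pair x ` UNIV)"
    by (rule has_sum_cong_neutral) auto
  also have "\<dots> \<longleftrightarrow> (((\<lambda>(u, v). if u = x then \<phi> v else 0) \<circ> Pair x) has_sum s) UNIV"
    by (rule has_sum_reindex) (auto simp: inj_on_def)
  also have "((\<lambda>(u, v). if u = x then \<phi> v else 0) \<circ> Pair x) = \<phi>" by (auto simp: o_def)
  finally show ?thesis .
qed

lemma has_sum_col:
  fixes \<phi> :: "'b \<Rightarrow> real"
  shows "((\<lambda>(u, v). if v = x then \<phi> u else 0) has_sum s) UNIV \<longleftrightarrow> (\<phi> has_sum s) UNIV"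
proof -
  have "((\<lambda>(u, v). if v = x then \<phi> u else 0) has_sum s) UNIV \<longleftrightarrow>
        ((\<lambda>(u, v). if v = x then \<phi> u else 0) has_sum s) ((\<lambda>u. (u, x)) ` UNIV)"
    by (rule has_sum_cong_neutral) auto
  also have "\<dots> \<longleftrightarrow> (((\<lambda>(u, v). if v = x then \<phi> u else 0) \<circ> (\<lambda>u. (u, x))) has_sum s) UNIV"
    by (rule has_sum_reindex) (auto simp: inj_on_def)
  also have "((\<lambda>(u, v). if v = x then \<phi> u else 0) \<circ> (\<lambda>u. (u, x))) = \<phi>" by (auto simp: o_def)
  finally show ?thesis .
qed

lemma summable_row:
  fixes \<phi> :: "'b \<Rightarrow> real"
  shows "(\<lambda>(u, v). if u = x then \<phi> v else 0) summable_on UNIV \<longleftrightarrow> \<phi> summable_on UNIV"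
  unfolding summable_on_def by (simp add: has_sum_row)

lemma summable_col:
  fixes \<phi> :: "'b \<Rightarrow> real"
  shows "(\<lambda>(u, v). if v = x then \<phi> u else 0) summable_on UNIV \<longleftrightarrow> \<phi> summable_on UNIV"
  unfolding summable_on_def by (simp add: has_sum_col)

lemma infsum_row:
  fixes \<phi> :: "'b \<Rightarrow> real"
  assumes "\<phi> summable_on UNIV"
  shows "infsum (\<lambda>(u, v). if u = x then \<phi> v else 0) UNIV = infsum \<phi> UNIV"
  using has_sum_row[of x \<phi>] assms by (meson has_sum_infsum infsumI)

lemma infsum_col:
  fixes \<phi> :: "'b \<Rightarrow> real"
  assumes "\<phi> summable_on UNIV"
  shows "infsum (\<lambda>(u, v). if v = x then \<phi> u else 0) UNIV = infsum \<phi> UNIV"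
  using has_sum_col[of x \<phi>] assms by (meson has_sum_infsum infsumI)

lemma row_summable_from_pairs:
  fixes h :: "'b \<times> 'b \<Rightarrow> real"
  assumes "h summable_on UNIV"
  shows "(\<lambda>v. h (x, v)) summable_on UNIV"
proof -
  have "h summable_on (Pair x ` UNIV)" using assms by (rule summable_on_subset_banach) auto
  then have "(h \<circ> Pair x) summable_on UNIV" by (subst summable_on_reindex[symmetric]) (auto simp: inj_on_def)
  then show ?thesis by (simp add: o_def)
qed

lemma single_le_infsum:
  fixes g :: "'b \<Rightarrow> real"
  assumes "g summable_on UNIV" "\<And>z. g z \<ge> 0"
  shows "g z \<le> infsum g UNIV"
  using finite_sum_le_infsum[OF assms(1), of "{z}"] assms(2) by auto

lemma infsum_tendsto_zero:
  fixes F :: "real \<Rightarrow> 'b \<Rightarrow> real"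
  assumes g: "g summable_on UNIV"
    and dom: "\<And>t y. 0 < t \<Longrightarrow> t \<le> 1 \<Longrightarrow> \<bar>F t y\<bar> \<le> g y"
    and lim: "\<And>y. ((\<lambda>t. F t y) \<longlongrightarrow> 0) (at_right 0)"
  shows "((\<lambda>t. infsum (F t) UNIV) \<longlongrightarrow> 0) (at_right 0)"
proof (rule tendstoI)
  fix e :: real assume e: "e > 0"
  have g0: "g y \<ge> 0" for y using dom[of 1 y] by simp
  have "(sum g \<longlongrightarrow> infsum g UNIV) (finite_subsets_at_top UNIV)"
    using has_sum_infsum[OF g] unfolding has_sum_def .
  then have "\<forall>\<^sub>F X in finite_subsets_at_top UNIV. dist (sum g X) (infsum g UNIV) < e / 2"
    using e by (intro tendstoD) auto
  then obtain X where X: "finite X" "dist (sum g X) (infsum g UNIV) < e / 2"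
    unfolding eventually_finite_subsets_at_top by blast
  have gX: "g summable_on X" using X by simp
  have gC: "g summable_on (UNIV - X)" using g by (rule summable_on_subset_banach) auto
  have "infsum g UNIV = infsum g X + infsum g (UNIV - X)"
    using infsum_Un_disjoint[OF gX gC] by (simp add: Un_Diff_cancel)
  then have tail: "infsum g (UNIV - X) < e / 2" using X by (simp add: dist_real_def)
  have "((\<lambda>t. \<Sum>y\<in>X. \<bar>F t y\<bar>) \<longlongrightarrow> (\<Sum>y\<in>X. \<bar>0\<bar>)) (at_right 0)"
    by (intro tendsto_sum tendsto_rabs lim)
  then have "\<forall>\<^sub>F t in at_right 0. dist (\<Sum>y\<in>X. \<bar>F t y\<bar>) 0 < e / 2"
    using e by (intro tendstoD) auto
  moreover have "\<forall>\<^sub>F t in at_right (0::real). 0 < t \<and> t \<le> 1"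
    unfolding eventually_at_right_field by (intro exI[of _ 1]) auto
  ultimately show "\<forall>\<^sub>F t in at_right 0. dist (infsum (F t) UNIV) 0 < e"
  proof eventually_elim
    case (elim t)
    have Fs: "F t summable_on UNIV" using g dom[OF elim(2)[THEN conjunct1] elim(2)[THEN conjunct2]]
      by (rule summable_dom)
    have FX: "F t summable_on X" using X by simp
    have FC: "F t summable_on (UNIV - X)" using Fs by (rule summable_on_subset_banach) auto
    have split: "infsum (F t) UNIV = infsum (F t) X + infsum (F t) (UNIV - X)"
      using infsum_Un_disjoint[OF FX FC] by (simp add: Un_Diff_cancel)
    have "\<bar>infsum (F t) (UNIV - X)\<bar> \<le> infsum g (UNIV - X)"
      using norm_infsum_le[OF has_sum_infsum[OF FC] has_sum_infsum[OF gC]] dom elim(2) by auto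
    moreover have "\<bar>infsum (F t) X\<bar> \<le> (\<Sum>y\<in>X. \<bar>F t y\<bar>)" using X by (simp add: sum_abs)
    ultimately have "\<bar>infsum (F t) UNIV\<bar> < e" using elim(1) tail split by (simp add: dist_real_def)
    then show ?case by (simp add: dist_real_def)
  qed
qed




locale egraph =
  fixes b :: "'a \<Rightarrow> 'a \<Rightarrow> real" and p :: real
  assumes b_nonneg: "\<And>x y. b x y \<ge> 0"
    and b_sym: "\<And>x y. b x y = b y x"
    and b_diag: "\<And>x. b x x = 0"
    and b_summ: "\<And>x. (\<lambda>y. b x y) summable_on UNIV"
    and p_gt: "p > 1"
begin

abbreviation h where "h f \<equiv> energy_summands b p f"

lemma h_apply: "h f (u, v) = b u v * \<bar>f u - f v\<bar> powr p"
  by (simp add: energy_summands_def)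

lemma h_nonneg: "h f z \<ge> 0"
  by (cases z) (simp add: h_apply b_nonneg)

lemma summable_on_finsum:
  fixes G :: "'i \<Rightarrow> 'b \<Rightarrow> real"
  assumes "finite S" "\<And>s. s \<in> S \<Longrightarrow> G s summable_on UNIV"
  shows "(\<lambda>z. \<Sum>s\<in>S. G s z) summable_on UNIV"
  using assms
proof (induction S rule: finite_induct)
  case empty then show ?case by simp
next
  case (insert s S)
  then show ?case by (simp add: summable_on_add)
qed

lemma fin_supp_summable:
  assumes fin: "finite {x. \<phi> x \<noteq> 0}"
  shows "h \<phi> summable_on UNIV"
proof -
  define S where "S = {x. \<phi> x \<noteq> 0}"
  define B where "B = (\<Sum>x\<in>S. \<bar>\<phi> x\<bar>)"
  have bound: "\<bar>\<phi> x\<bar> \<le> B" for x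
  proof (cases "x \<in> S")
    case True
    then show ?thesis unfolding B_def using fin S_def
      by (intro member_le_sum) auto
  next
    case False
    then show ?thesis unfolding B_def S_def by (simp add: sum_nonneg)
  qed
  have B0: "B \<ge> 0" unfolding B_def by (simp add: sum_nonneg)
  define R where "R s = (\<lambda>(u, v). if u = s then b s v else 0)" for s
  define Cc where "Cc s = (\<lambda>(u, v). if v = s then b u s else 0)" for s
  define G where "G z = (2 * B) powr p * (\<Sum>s\<in>S. R s z + Cc s z)" for z
  have "(\<lambda>z. \<Sum>s\<in>S. R s z + Cc s z) summable_on UNIV"
  proof (rule summable_on_finsum)
    show "finite S" using fin S_def by simp
    fix s
    have "R s summable_on UNIV" unfolding R_def using b_summ[of s] by (simp add: summable_row)
    moreover have "Cc s summable_on UNIV" unfolding Cc_def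
      using b_summ[of s] summable_col[of s "\<lambda>u. b u s"] by (simp add: b_sym[of _ s])
    ultimately show "(\<lambda>z. R s z + Cc s z) summable_on UNIV" by (rule summable_on_add)
  qed
  then have Gs: "G summable_on UNIV" unfolding G_def by (rule summable_on_cmult_right)
  have RC0: "R s z \<ge> 0" "Cc s z \<ge> 0" for s z
    by (cases z; simp add: R_def Cc_def b_nonneg)+
  show ?thesis
  proof (rule summable_on_comparison_test[OF Gs])
    fix z :: "'a \<times> 'a"
    show "0 \<le> h \<phi> z" by (rule h_nonneg)
    obtain u v where z: "z = (u, v)" by (cases z)
    have d: "\<bar>\<phi> u - \<phi> v\<bar> \<le> 2 * B" using bound[of u] bound[of v] by linarith
    have hb: "h \<phi> z \<le> b u v * (2 * B) powr p"
      unfolding z h_apply using d p_gt by (intro mult_left_mono powr_mono2) (auto simp: b_nonneg)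
    show "h \<phi> z \<le> G z"
    proof (cases "u \<in> S \<or> v \<in> S")
      case True
      have bu: "b u v \<le> R u z + Cc u z" and bv: "b u v \<le> R v z + Cc v z"
        using RC0 b_nonneg unfolding z R_def Cc_def by auto
      moreover have "R s z + Cc s z \<le> (\<Sum>s\<in>S. R s z + Cc s z)" if "s \<in> S" for s
        using that fin S_def RC0 by (intro member_le_sum) (auto intro: add_nonneg_nonneg)
      ultimately have buv: "b u v \<le> (\<Sum>s\<in>S. R s z + Cc s z)" using True bu bv
        by (meson order_trans)
      have "b u v * (2 * B) powr p \<le> (2 * B) powr p * (\<Sum>s\<in>S. R s z + Cc s z)"
        using mult_right_mono[OF buv powr_ge_zero[of "2 * B" p]] by (simp add: mult.commute)
      then show ?thesis using hb unfolding G_def by linarith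
    next
      case False
      then have "\<phi> u = 0" "\<phi> v = 0" by (auto simp: S_def)
      then have "h \<phi> z = 0" using p_gt by (simp add: z h_apply)
      moreover have "G z \<ge> 0" unfolding G_def using RC0 by (intro mult_nonneg_nonneg sum_nonneg add_nonneg_nonneg) auto
      ultimately show ?thesis by simp
    qed
  qed
qed

lemma clamp_summable:
  assumes "h \<phi> summable_on UNIV"
  defines "v \<equiv> (\<lambda>x. 1 - max 0 (min 1 (\<phi> x)))"
  shows "h v summable_on UNIV" "infsum (h v) UNIV \<le> infsum (h \<phi>) UNIV"
proof -
  have le: "h v z \<le> h \<phi> z" for z
  proof -
    obtain x y where z: "z = (x, y)" by (cases z)
    have "\<bar>v x - v y\<bar> \<le> \<bar>\<phi> x - \<phi> y\<bar>" unfolding v_def by (auto simp: max_def min_def abs_if)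
    then show ?thesis unfolding z h_apply using p_gt
      by (intro mult_left_mono powr_mono2) (auto simp: b_nonneg)
  qed
  show s: "h v summable_on UNIV" using assms(1) le h_nonneg by (rule summable_on_comparison_test)
  show "infsum (h v) UNIV \<le> infsum (h \<phi>) UNIV" using s assms(1) le by (rule infsum_mono)
qed

lemma variation:
  fixes x :: 'a
  assumes hk: "h \<kappa> summable_on UNIV" and t: "0 < t" "t \<le> 1"
  defines "g \<equiv> \<kappa>(x := \<kappa> x + t)"
  shows "h g summable_on UNIV"
    and "(\<lambda>y. b x y * spow p (\<kappa> x - \<kappa> y + t)) summable_on UNIV"
    and "infsum (h g) UNIV - infsum (h \<kappa>) UNIV \<le> 2 * p * t * infsum (\<lambda>y. b x y * spow p (\<kappa> x - \<kappa> y + t)) UNIV"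
proof -
  define d where "d y = \<kappa> x - \<kappa> y" for y
  define r where "r y = b x y * \<bar>d y\<bar> powr p" for y
  have rs: "r summable_on UNIV"
    unfolding r_def d_def using row_summable_from_pairs[OF hk, of x] by (simp add: h_apply)
  have r0: "r y \<ge> 0" for y by (simp add: r_def b_nonneg)
  define \<phi> where "\<phi> y = b x y * (\<bar>d y + t\<bar> powr p - \<bar>d y\<bar> powr p)" for y
  define G where "G y = 2 powr p * b x y + (2 powr p + 1) * r y" for y
  have Gs: "G summable_on UNIV" unfolding G_def
    by (intro summable_on_add summable_on_cmult_right b_summ rs)
  have \<phi>s: "\<phi> summable_on UNIV"
  proof (rule summable_dom[OF Gs])
    fix y
    have 1: "\<bar>d y + t\<bar> powr p \<le> 2 powr p * (1 + \<bar>d y\<bar> powr p)"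
      using powr_bound1[OF p_gt, of t p "d y"] t p_gt by auto
    have "\<bar>\<phi> y\<bar> \<le> b x y * (\<bar>d y + t\<bar> powr p + \<bar>d y\<bar> powr p)"
      unfolding \<phi>_def abs_mult abs_of_nonneg[OF b_nonneg]
      by (intro mult_left_mono) (auto simp: abs_le_iff b_nonneg)
    also have "\<dots> \<le> b x y * (2 powr p * (1 + \<bar>d y\<bar> powr p) + \<bar>d y\<bar> powr p)"
      using 1 b_nonneg[of x y] by (intro mult_left_mono) auto
    also have "\<dots> = G y" unfolding G_def r_def by (simp add: algebra_simps)
    finally show "\<bar>\<phi> y\<bar> \<le> G y" .
  qed
  define R where "R = (\<lambda>(u, v). if u = x then \<phi> v else 0)"
  define Cc where "Cc = (\<lambda>(u, v). if v = x then \<phi> u else 0)"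
  have Rs: "R summable_on UNIV" unfolding R_def using \<phi>s by (simp add: summable_row)
  have Cs: "Cc summable_on UNIV" unfolding Cc_def using \<phi>s by (simp add: summable_col)
  have eq: "h g z = h \<kappa> z + (R z + Cc z)" for z
  proof -
    obtain u v where z: "z = (u, v)" by (cases z)
    show ?thesis
    proof (cases "u = x")
      case True
      show ?thesis
      proof (cases "v = x")
        case True
        then show ?thesis using \<open>u = x\<close> by (simp add: z h_apply R_def Cc_def \<phi>_def b_diag)
      next
        case False
        then show ?thesis using \<open>u = x\<close>
          by (simp add: z h_apply R_def Cc_def \<phi>_def g_def d_def algebra_simps)
      qed
    next
      case False
      show ?thesis
      proof (cases "v = x")
        case True
        have a0: "\<kappa> u - (t + \<kappa> x) = - (t + d u)" "\<kappa> u - \<kappa> x = - d u" by (simp_all add: d_def)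
        have a: "\<bar>\<kappa> u - (t + \<kappa> x)\<bar> = \<bar>t + d u\<bar>" "\<bar>\<kappa> u - \<kappa> x\<bar> = \<bar>d u\<bar>"
          by (simp_all only: a0 abs_minus_cancel)
        show ?thesis using \<open>u \<noteq> x\<close> True
          by (simp add: z h_apply R_def Cc_def \<phi>_def g_def a b_sym[of u x] algebra_simps)
      next
        case False
        then show ?thesis using \<open>u \<noteq> x\<close> by (simp add: z h_apply R_def Cc_def g_def)
      qed
    qed
  qed
  have RCs: "(\<lambda>z. R z + Cc z) summable_on UNIV" using Rs Cs by (rule summable_on_add)
  have hg: "h g = (\<lambda>z. h \<kappa> z + (R z + Cc z))" using eq by auto
  show "h g summable_on UNIV" unfolding hg using hk RCs by (rule summable_on_add)
  have diff: "infsum (h g) UNIV - infsum (h \<kappa>) UNIV = 2 * infsum \<phi> UNIV"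
    unfolding hg using infsum_add[OF hk RCs] infsum_add[OF Rs Cs]
      infsum_row[OF \<phi>s, of x] infsum_col[OF \<phi>s, of x] unfolding R_def Cc_def by simp
  define S where "S y = b x y * spow p (\<kappa> x - \<kappa> y + t)" for y
  have Ss: "S summable_on UNIV"
  proof (rule summable_dom[OF Gs])
    fix y
    have "\<bar>S y\<bar> = b x y * \<bar>d y + t\<bar> powr (p - 1)"
      unfolding S_def abs_mult abs_spow using b_nonneg[of x y] by (simp add: d_def)
    also have "\<dots> \<le> b x y * (2 powr p * (1 + \<bar>d y\<bar> powr p))"
      using powr_bound1[OF p_gt, of t "p - 1" "d y"] t p_gt b_nonneg[of x y]
      by (intro mult_left_mono) auto
    also have "\<dots> \<le> G y" unfolding G_def r_def using b_nonneg[of x y]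
      by (simp add: algebra_simps)
    finally show "\<bar>S y\<bar> \<le> G y" .
  qed
  show "(\<lambda>y. b x y * spow p (\<kappa> x - \<kappa> y + t)) summable_on UNIV" using Ss unfolding S_def[abs_def] .
  have "infsum \<phi> UNIV \<le> infsum (\<lambda>y. (p * t) * S y) UNIV"
  proof (rule infsum_mono[OF \<phi>s])
    show "(\<lambda>y. (p * t) * S y) summable_on UNIV" using Ss by (rule summable_on_cmult_right)
    fix y
    have "\<bar>d y + t\<bar> powr p - \<bar>d y\<bar> powr p \<le> p * t * spow p (d y + t)" by (rule pow_diff_upper[OF p_gt])
    then have "\<phi> y \<le> b x y * (p * t * spow p (d y + t))"
      unfolding \<phi>_def using b_nonneg[of x y] by (intro mult_left_mono) auto
    then show "\<phi> y \<le> (p * t) * S y" by (simp add: S_def d_def algebra_simps)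
  qed
  also have "\<dots> = (p * t) * infsum S UNIV" using Ss by (simp add: infsum_cmult_right)
  finally show "infsum (h g) UNIV - infsum (h \<kappa>) UNIV \<le> 2 * p * t * infsum (\<lambda>y. b x y * spow p (\<kappa> x - \<kappa> y + t)) UNIV"
    unfolding diff S_def[abs_def] by simp
qed

end



context egraph
begin

lemma superharm_of_min:
  fixes x :: 'a
  assumes hk: "h \<kappa> summable_on UNIV"
    and min: "\<And>t. 0 < t \<Longrightarrow> t \<le> 1 \<Longrightarrow> infsum (h \<kappa>) UNIV \<le> infsum (h (\<kappa>(x := \<kappa> x + t))) UNIV"
  shows "(\<lambda>y. b x y * \<bar>\<kappa> x - \<kappa> y\<bar> powr (p - 1)) summable_on UNIV"
    and "infsum (\<lambda>y. b x y * spow p (\<kappa> x - \<kappa> y)) UNIV \<ge> 0"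
proof -
  define d where "d y = \<kappa> x - \<kappa> y" for y
  define r where "r y = b x y * \<bar>d y\<bar> powr p" for y
  have rs: "r summable_on UNIV"
    unfolding r_def d_def using row_summable_from_pairs[OF hk, of x] by (simp add: h_apply)
  define G where "G y = b x y + r y" for y
  have Gs: "G summable_on UNIV" unfolding G_def[abs_def] by (intro summable_on_add b_summ rs)
  have absF: "\<bar>b x y * \<bar>d y\<bar> powr (p - 1)\<bar> \<le> G y" for y
    using powr_bound2[OF p_gt, of "d y"] b_nonneg[of x y]
    unfolding G_def r_def
    by (simp add: abs_mult) (metis distrib_left mult.right_neutral mult_left_mono)
  show "(\<lambda>y. b x y * \<bar>\<kappa> x - \<kappa> y\<bar> powr (p - 1)) summable_on UNIV"
    using summable_dom[OF Gs absF] unfolding d_def .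
  define S where "S t = infsum (\<lambda>y. b x y * spow p (d y + t)) UNIV" for t
  have S0s: "(\<lambda>y. b x y * spow p (d y + 0)) summable_on UNIV"
  proof (rule summable_dom[OF Gs])
    fix y
    show "\<bar>b x y * spow p (d y + 0)\<bar> \<le> G y"
      using absF[of y] b_nonneg[of x y] by (simp add: abs_mult abs_spow)
  qed
  have Spos: "S t \<ge> 0" if t: "0 < t" "t \<le> 1" for t
  proof -
    have "0 \<le> infsum (h (\<kappa>(x := \<kappa> x + t))) UNIV - infsum (h \<kappa>) UNIV" using min[OF t] by simp
    also have "\<dots> \<le> 2 * p * t * S t"
      using variation(3)[OF hk t, of x] unfolding S_def d_def by simp
    finally have "0 \<le> (2 * p * t) * S t" by simp
    moreover have "2 * p * t > 0" using p_gt t by simp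
    ultimately show ?thesis by (simp add: zero_le_mult_iff)
  qed
  define H where "H y = 2 powr p * (1 + \<bar>d y\<bar> powr p)" for y
  define D where "D y = b x y * (2 * H y)" for y
  have Ds: "D summable_on UNIV"
  proof -
    have "(\<lambda>y. (2 * 2 powr p) * b x y + (2 * 2 powr p) * r y) summable_on UNIV"
      by (intro summable_on_add summable_on_cmult_right b_summ rs)
    moreover have "(\<lambda>y. (2 * 2 powr p) * b x y + (2 * 2 powr p) * r y) = D"
      by (auto simp: D_def H_def r_def algebra_simps)
    ultimately show ?thesis by simp
  qed
  define F where "F t y = b x y * spow p (d y + t) - b x y * spow p (d y + 0)" for t y
  have Fdom: "\<bar>F t y\<bar> \<le> D y" if "0 < t" "t \<le> 1" for t y
  proof -
    have 1: "\<bar>spow p (d y + t)\<bar> \<le> H y"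
      unfolding abs_spow H_def using powr_bound1[OF p_gt, of t "p - 1" "d y"] that p_gt by auto
    have 2: "\<bar>spow p (d y + 0)\<bar> \<le> H y"
      unfolding abs_spow H_def using powr_bound1[OF p_gt, of 0 "p - 1" "d y"] p_gt by auto
    have "\<bar>F t y\<bar> \<le> b x y * \<bar>spow p (d y + t)\<bar> + b x y * \<bar>spow p (d y + 0)\<bar>"
    proof -
      have "\<bar>F t y\<bar> = b x y * \<bar>spow p (d y + t) - spow p (d y + 0)\<bar>"
        unfolding F_def using b_nonneg[of x y] by (simp add: abs_mult flip: right_diff_distrib)
      also have "\<dots> \<le> b x y * (\<bar>spow p (d y + t)\<bar> + \<bar>spow p (d y + 0)\<bar>)"
        using b_nonneg[of x y] by (intro mult_left_mono abs_triangle_ineq4) auto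
      finally show ?thesis by (simp add: distrib_left)
    qed
    also have "\<dots> \<le> b x y * H y + b x y * H y"
      using 1 2 b_nonneg[of x y] by (intro add_mono mult_left_mono) auto
    finally show ?thesis by (simp add: D_def algebra_simps)
  qed
  have Flim: "((\<lambda>t. F t y) \<longlongrightarrow> 0) (at_right 0)" for y
  proof -
    have "((\<lambda>t. b x y * spow p (d y + t) - b x y * spow p (d y + 0)) \<longlongrightarrow>
          b x y * spow p (d y) - b x y * spow p (d y + 0)) (at_right 0)"
      by (intro tendsto_diff tendsto_mult tendsto_const spow_cont_right p_gt)
    then show ?thesis unfolding F_def by simp
  qed
  have Ftend: "((\<lambda>t. infsum (F t) UNIV) \<longlongrightarrow> 0) (at_right 0)"
    by (rule infsum_tendsto_zero[OF Ds Fdom Flim])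
  have evS: "\<forall>\<^sub>F t in at_right (0::real). S t = S 0 + infsum (F t) UNIV \<and> S t \<ge> 0"
  proof -
    have "\<forall>\<^sub>F t in at_right (0::real). 0 < t \<and> t \<le> 1"
      unfolding eventually_at_right_field by (intro exI[of _ 1]) auto
    then show ?thesis
    proof eventually_elim
      case (elim t)
      have St: "(\<lambda>y. b x y * spow p (d y + t)) summable_on UNIV"
        using variation(2)[OF hk, of t x] elim unfolding d_def by (simp add: add.commute add.left_commute)
      have "infsum (F t) UNIV = S t - S 0"
        unfolding F_def[abs_def] S_def using infsum_diff'[OF St S0s] by simp
      then show ?case using Spos elim by simp
    qed
  qed
  have "((\<lambda>t. S 0 + infsum (F t) UNIV) \<longlongrightarrow> S 0 + 0) (at_right 0)"
    by (intro tendsto_add tendsto_const Ftend)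
  moreover have ev2: "\<forall>\<^sub>F t in at_right 0. S t = S 0 + infsum (F t) UNIV"
    using evS by (rule eventually_mono) simp
  ultimately have "(S \<longlongrightarrow> S 0) (at_right 0)"
    using tendsto_cong[OF ev2] by simp
  moreover have "\<forall>\<^sub>F t in at_right (0::real). 0 \<le> S t" using evS by (auto elim: eventually_mono)
  ultimately have "S 0 \<ge> 0" by (intro tendsto_lowerbound) auto
  then show "infsum (\<lambda>y. b x y * spow p (\<kappa> x - \<kappa> y)) UNIV \<ge> 0" unfolding S_def d_def by simp
qed

end



context egraph
begin

lemma step_fun:
  assumes par: "\<And>S \<epsilon>. finite S \<Longrightarrow> \<epsilon> > 0 \<Longrightarrow>
     \<exists>\<phi>. finite {x. \<phi> x \<noteq> 0} \<and> (\<forall>x\<in>S. 1 \<le> \<phi> x) \<and> infsum (h \<phi>) UNIV < \<epsilon>"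
    and S: "finite S" and e: "\<epsilon> > 0"
  shows "\<exists>v T. finite T \<and> S \<subseteq> T \<and> (\<forall>x. 0 \<le> v x \<and> v x \<le> 1) \<and> (\<forall>x\<in>S. v x = 0) \<and>
           (\<forall>x. x \<notin> T \<longrightarrow> v x = 1) \<and> h v summable_on UNIV \<and> infsum (h v) UNIV \<le> \<epsilon>"
proof -
  obtain \<phi> where \<phi>: "finite {x. \<phi> x \<noteq> 0}" "\<forall>x\<in>S. 1 \<le> \<phi> x" "infsum (h \<phi>) UNIV < \<epsilon>"
    using par[OF S e] by blast
  define v where "v = (\<lambda>x. 1 - max 0 (min 1 (\<phi> x)))"
  have hs: "h \<phi> summable_on UNIV" by (rule fin_supp_summable[OF \<phi>(1)])
  note cl = clamp_summable[OF hs]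
  show ?thesis
  proof (intro exI conjI allI impI ballI)
    show "finite (S \<union> {x. \<phi> x \<noteq> 0})" using S \<phi>(1) by simp
    show "S \<subseteq> S \<union> {x. \<phi> x \<noteq> 0}" by auto
    fix x
    show "0 \<le> v x" "v x \<le> 1" by (auto simp: v_def)
  next
    fix x assume "x \<in> S" then show "v x = 0" using \<phi>(2) by (auto simp: v_def)
  next
    fix x assume "x \<notin> S \<union> {x. \<phi> x \<noteq> 0}" then show "v x = 1" by (auto simp: v_def)
  next
    show "h v summable_on UNIV" using cl(1) unfolding v_def .
    show "infsum (h v) UNIV \<le> \<epsilon>" using cl(2) \<phi>(3) unfolding v_def by simp
  qed
qed

lemma geom_sum_le: "(\<Sum>n\<in>N. (1/2::real) ^ n) \<le> 2" if "finite N"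
proof -
  have "(\<Sum>n\<in>N. (1/2::real) ^ n) \<le> (\<Sum>n. (1/2::real) ^ n)"
    by (rule sum_le_suminf) (use that in \<open>auto intro: summable_geometric\<close>)
  also have "\<dots> = 2" using suminf_geometric[of "1/2::real"] by simp
  finally show ?thesis .
qed

lemma psi_exists:
  assumes par: "\<And>S \<epsilon>. finite S \<Longrightarrow> \<epsilon> > 0 \<Longrightarrow>
     \<exists>\<phi>. finite {x. \<phi> x \<noteq> 0} \<and> (\<forall>x\<in>S. 1 \<le> \<phi> x) \<and> infsum (h \<phi>) UNIV < \<epsilon>"
    and cnt: "countable (UNIV :: 'a set)" and K: "finite K"
  shows "\<exists>\<psi>. (\<forall>x. 0 \<le> \<psi> x) \<and> (\<forall>x\<in>K. \<psi> x = 0) \<and> h \<psi> summable_on UNIV \<and>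
             (\<forall>M. \<exists>F. finite F \<and> (\<forall>x. x \<notin> F \<longrightarrow> M < \<psi> x))"
proof -
  define e where "e = from_nat_into (UNIV :: 'a set)"
  have surj: "\<exists>n. e n = x" for x
    using range_from_nat_into[OF _ cnt] unfolding e_def by (metis UNIV_I UNIV_not_empty imageE)
  define eps where "eps n = (1/2::real) ^ n / real (Suc n) powr p" for n
  have eps_pos: "eps n > 0" for n by (simp add: eps_def)
  define Q where "Q = (\<lambda>(S :: 'a set) (n::nat) (vT :: ('a \<Rightarrow> real) \<times> 'a set).
     finite (snd vT) \<and> S \<subseteq> snd vT \<and> (\<forall>x. 0 \<le> fst vT x \<and> fst vT x \<le> 1) \<and> (\<forall>x\<in>S. fst vT x = 0) \<and>
     (\<forall>x. x \<notin> snd vT \<longrightarrow> fst vT x = 1) \<and> h (fst vT) summable_on UNIV \<and> infsum (h (fst vT)) UNIV \<le> eps n)"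
  have "\<forall>Sn. \<exists>vT. finite (fst Sn) \<longrightarrow> Q (fst Sn) (snd Sn) vT"
  proof
    fix Sn :: "'a set \<times> nat"
    show "\<exists>vT. finite (fst Sn) \<longrightarrow> Q (fst Sn) (snd Sn) vT"
    proof (cases "finite (fst Sn)")
      case True
      from step_fun[OF par True eps_pos[of "snd Sn"]] obtain v T where
        "finite T \<and> fst Sn \<subseteq> T \<and> (\<forall>x. 0 \<le> v x \<and> v x \<le> 1) \<and> (\<forall>x\<in>fst Sn. v x = 0) \<and>
           (\<forall>x. x \<notin> T \<longrightarrow> v x = 1) \<and> h v summable_on UNIV \<and> infsum (h v) UNIV \<le> eps (snd Sn)"
        by blast
      then show ?thesis unfolding Q_def by (intro exI[of _ "(v, T)"]) simp
    qed simp
  qed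
  then obtain st where st: "\<And>S n. finite S \<Longrightarrow> Q S n (st (S, n))"
    by (metis choice fst_conv snd_conv)
  define F where "F = rec_nat K (\<lambda>n A. snd (st (A \<union> {e n}, n)))"
  define v where "v n = fst (st (F n \<union> {e n}, n))" for n
  have F0: "F 0 = K" and FS: "F (Suc n) = snd (st (F n \<union> {e n}, n))" for n
    by (simp_all add: F_def)
  have finF: "finite (F n)" for n
    by (induction n) (use K st in \<open>auto simp: F0 FS Q_def\<close>)
  have Qn: "Q (F n \<union> {e n}) n (st (F n \<union> {e n}, n))" for n using st finF by simp
  have v01: "0 \<le> v n x" "v n x \<le> 1" for n x using Qn[of n] by (auto simp: Q_def v_def)
  have vzero: "x \<in> F n \<union> {e n} \<Longrightarrow> v n x = 0" for n x using Qn[of n] by (auto simp: Q_def v_def)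
  have vone: "x \<notin> F (Suc n) \<Longrightarrow> v n x = 1" for n x using Qn[of n] by (auto simp: Q_def v_def FS)
  have Fsub: "F n \<union> {e n} \<subseteq> F (Suc n)" for n using Qn[of n] by (auto simp: Q_def FS)
  have vsum: "h (v n) summable_on UNIV" "infsum (h (v n)) UNIV \<le> eps n" for n
    using Qn[of n] by (auto simp: Q_def v_def)
  have Fmono: "m \<le> n \<Longrightarrow> F m \<subseteq> F n" for m n
    by (rule lift_Suc_mono_le[of F]) (use Fsub in auto)
  have vz: "x \<in> F j \<Longrightarrow> j \<le> n \<Longrightarrow> v n x = 0" for x j n using Fmono vzero by blast
  have inF: "\<exists>j. x \<in> F j" for x
  proof -
    obtain n where "e n = x" using surj by blast
    then show ?thesis using Fsub[of n] by blast
  qed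
  define T where "T x n = real (Suc n) * v n x" for x n
  define \<psi> where "\<psi> x = (SUP n. T x n)" for x
  have psiMax: "\<psi> x = Max (T x ` {..j})" if "x \<in> F j" for x j
  proof -
    have "range (T x) = T x ` {..j}"
    proof
      show "range (T x) \<subseteq> T x ` {..j}"
      proof
        fix y assume "y \<in> range (T x)"
        then obtain n where n: "y = T x n" by blast
        show "y \<in> T x ` {..j}"
        proof (cases "n \<le> j")
          case True then show ?thesis using n by auto
        next
          case False
          then have "T x n = T x j" using vz[OF that] by (simp add: T_def)
          then show ?thesis using n by auto
        qed
      qed
    qed auto
    then show ?thesis unfolding \<psi>_def by (simp add: cSup_eq_Max)
  qed
  have psiT: "T x n \<le> \<psi> x" for x n
  proof -
    obtain j where j: "x \<in> F j" using inF by blast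
    have "x \<in> F (max j n)" using Fmono[of j "max j n"] j by auto
    then show ?thesis using psiMax by (auto intro!: Max_ge)
  qed
  have psi0: "0 \<le> \<psi> x" for x using psiT[of x 0] v01[of 0 x] by (simp add: T_def)
  have psiK: "\<psi> x = 0" if "x \<in> K" for x
  proof -
    have "x \<in> F 0" using that F0 by simp
    then have "\<psi> x = T x 0" using psiMax[of x 0] by simp
    then show ?thesis using vzero[of x 0] \<open>x \<in> F 0\<close> by (simp add: T_def)
  qed
  have psiInf: "\<exists>G. finite G \<and> (\<forall>x. x \<notin> G \<longrightarrow> M < \<psi> x)" for M
  proof -
    obtain n where n: "M < real n" using reals_Archimedean2 by blast
    show ?thesis
    proof (intro exI conjI allI impI)
      show "finite (F (Suc n))" by (rule finF)
      fix x assume "x \<notin> F (Suc n)"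
      then have "v n x = 1" by (rule vone)
      then have "T x n = real (Suc n)" by (simp add: T_def)
      then show "M < \<psi> x" using psiT[of x n] n by simp
    qed
  qed
  have pairb: "\<exists>n. \<bar>\<psi> x - \<psi> y\<bar> \<le> real (Suc n) * \<bar>v n x - v n y\<bar>" for x y
  proof -
    obtain j1 j2 where "x \<in> F j1" "y \<in> F j2" using inF by blast
    then have xj: "x \<in> F (max j1 j2)" and yj: "y \<in> F (max j1 j2)" using Fmono by (auto intro: max.cobounded1 max.cobounded2)
    define j where "j = max j1 j2"
    have px: "\<psi> x = Max (T x ` {..j})" and py: "\<psi> y = Max (T y ` {..j})"
      using psiMax xj yj unfolding j_def by auto
    show ?thesis
    proof (cases "\<psi> y \<le> \<psi> x")
      case True
      have "Max (T x ` {..j}) \<in> T x ` {..j}" by (intro Max_in) auto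
      then obtain n where "Max (T x ` {..j}) = T x n" by blast
      then have n: "\<psi> x = T x n" using px by simp
      have "T y n \<le> \<psi> y" by (rule psiT)
      then have "\<bar>\<psi> x - \<psi> y\<bar> \<le> real (Suc n) * (v n x - v n y)" using True n by (simp add: T_def algebra_simps)
      also have "\<dots> \<le> real (Suc n) * \<bar>v n x - v n y\<bar>" by (intro mult_left_mono) auto
      finally show ?thesis by blast
    next
      case False
      have "Max (T y ` {..j}) \<in> T y ` {..j}" by (intro Max_in) auto
      then obtain n where "Max (T y ` {..j}) = T y n" by blast
      then have n: "\<psi> y = T y n" using py by simp
      have "T x n \<le> \<psi> x" by (rule psiT)
      then have "\<bar>\<psi> x - \<psi> y\<bar> \<le> real (Suc n) * (v n y - v n x)" using False n by (simp add: T_def algebra_simps)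
      also have "\<dots> \<le> real (Suc n) * \<bar>v n x - v n y\<bar>" by (intro mult_left_mono) auto
      finally show ?thesis by blast
    qed
  qed
  have hb: "\<exists>n. h \<psi> z \<le> real (Suc n) powr p * h (v n) z" for z
  proof -
    obtain x y where z: "z = (x, y)" by (cases z)
    obtain n where n: "\<bar>\<psi> x - \<psi> y\<bar> \<le> real (Suc n) * \<bar>v n x - v n y\<bar>" using pairb by blast
    have "\<bar>\<psi> x - \<psi> y\<bar> powr p \<le> (real (Suc n) * \<bar>v n x - v n y\<bar>) powr p"
      using n p_gt by (intro powr_mono2) auto
    also have "\<dots> = real (Suc n) powr p * \<bar>v n x - v n y\<bar> powr p" by (simp add: powr_mult)
    finally have "b x y * \<bar>\<psi> x - \<psi> y\<bar> powr p \<le> b x y * (real (Suc n) powr p * \<bar>v n x - v n y\<bar> powr p)"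
      using b_nonneg[of x y] by (intro mult_left_mono) auto
    then show ?thesis unfolding z h_apply by (intro exI[of _ n]) (simp add: algebra_simps)
  qed
  then obtain kk where kk: "\<And>z. h \<psi> z \<le> real (Suc (kk z)) powr p * h (v (kk z)) z" by metis
  have partial: "sum (h \<psi>) P \<le> 2" if P: "finite P" for P
  proof -
    have "sum (h \<psi>) P \<le> (\<Sum>z\<in>P. \<Sum>n\<in>kk ` P. real (Suc n) powr p * h (v n) z)"
    proof (rule sum_mono)
      fix z assume z: "z \<in> P"
      have "real (Suc (kk z)) powr p * h (v (kk z)) z \<le> (\<Sum>n\<in>kk ` P. real (Suc n) powr p * h (v n) z)"
        using P z by (intro member_le_sum) (auto intro: mult_nonneg_nonneg h_nonneg)
      then show "h \<psi> z \<le> (\<Sum>n\<in>kk ` P. real (Suc n) powr p * h (v n) z)" using kk[of z] by linarith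
    qed
    also have "\<dots> = (\<Sum>n\<in>kk ` P. real (Suc n) powr p * sum (h (v n)) P)"
      by (subst sum.swap) (simp add: sum_distrib_left)
    also have "\<dots> \<le> (\<Sum>n\<in>kk ` P. real (Suc n) powr p * eps n)"
    proof (rule sum_mono)
      fix n
      have "sum (h (v n)) P \<le> infsum (h (v n)) UNIV"
        using P vsum(1)[of n] by (intro finite_sum_le_infsum) (auto intro: h_nonneg)
      also have "\<dots> \<le> eps n" by (rule vsum(2))
      finally show "real (Suc n) powr p * sum (h (v n)) P \<le> real (Suc n) powr p * eps n"
        by (intro mult_left_mono) auto
    qed
    also have "\<dots> = (\<Sum>n\<in>kk ` P. (1/2::real) ^ n)" by (simp add: eps_def)
    also have "\<dots> \<le> 2" using P by (intro geom_sum_le) auto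
    finally show ?thesis .
  qed
  have "h \<psi> summable_on UNIV"
    by (rule nonneg_bdd_above_summable_on) (use partial h_nonneg in \<open>auto simp: bdd_above_def\<close>)
  then show ?thesis using psi0 psiK psiInf by blast
qed

end



context egraph
begin

lemma minimizer:
  fixes \<psi> :: "'a \<Rightarrow> real" and K :: "'a set"
  assumes conn: "\<And>x y. (x, y) \<in> {(u, v). b u v > 0}\<^sup>*"
    and k0: "k0 \<in> K" and cnt: "countable (UNIV :: 'a set)"
    and psi_s: "h \<psi> summable_on UNIV" and psiK: "\<forall>x\<in>K. \<psi> x = 0"
  defines "C \<equiv> {f. (\<forall>x\<in>K. f x = 0) \<and> (\<forall>x. \<psi> x \<le> f x) \<and> h f summable_on UNIV}"
  shows "\<exists>\<kappa>\<in>C. \<forall>g\<in>C. infsum (h \<kappa>) UNIV \<le> infsum (h g) UNIV"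
proof -
  define \<Phi> where "\<Phi> f = infsum (h f) UNIV" for f
  have psiC: "\<psi> \<in> C" using psiK psi_s by (auto simp: C_def)
  have ne: "\<Phi> ` C \<noteq> {}" using psiC by auto
  have Phi0: "\<Phi> f \<ge> 0" for f unfolding \<Phi>_def by (intro infsum_nonneg h_nonneg)
  have bdd: "bdd_below (\<Phi> ` C)" using Phi0 by (auto simp: bdd_below_def)
  define I where "I = Inf (\<Phi> ` C)"
  have "\<forall>n. \<exists>f. f \<in> C \<and> \<Phi> f < I + 1 / real (Suc n)"
  proof
    fix n
    have "Inf (\<Phi> ` C) < I + 1 / real (Suc n)" unfolding I_def by simp
    from cInf_lessD[OF ne this] show "\<exists>f. f \<in> C \<and> \<Phi> f < I + 1 / real (Suc n)" by blast
  qed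
  then obtain fs where fsC: "\<And>n. fs n \<in> C" and fsI: "\<And>n. \<Phi> (fs n) < I + 1 / real (Suc n)"
    by metis
  have fsI1: "\<Phi> (fs n) \<le> I + 1" for n
  proof -
    have "1 / real (Suc n) \<le> 1" by simp
    then show ?thesis using fsI[of n] by linarith
  qed
  have fsS: "h (fs n) summable_on UNIV" for n using fsC[of n] by (simp add: C_def)
  have edge: "\<bar>fs n u - fs n v\<bar> \<le> ((I + 1) / b u v) powr (1 / p)" if buv: "b u v > 0" for n u v
  proof -
    have "b u v * \<bar>fs n u - fs n v\<bar> powr p = h (fs n) (u, v)" by (simp add: h_apply)
    also have "\<dots> \<le> \<Phi> (fs n)" unfolding \<Phi>_def by (intro single_le_infsum fsS h_nonneg)
    also have "\<dots> \<le> I + 1" by (rule fsI1)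
    finally have "\<bar>fs n u - fs n v\<bar> powr p \<le> (I + 1) / b u v" using buv by (simp add: pos_le_divide_eq mult.commute)
    then have "(\<bar>fs n u - fs n v\<bar> powr p) powr (1 / p) \<le> ((I + 1) / b u v) powr (1 / p)"
      using p_gt by (intro powr_mono2) auto
    then show ?thesis using p_gt by (simp add: powr_powr)
  qed
  have bnd: "\<exists>B. \<forall>n. \<bar>fs n x\<bar> \<le> B" for x
  proof -
    have "(k0, x) \<in> {(u, v). b u v > 0}\<^sup>*" by (rule conn)
    then show ?thesis
    proof (induction rule: rtrancl_induct)
      case base
      then show ?case using fsC k0 by (auto simp: C_def)
    next
      case (step u v)
      then obtain B where B: "\<And>n. \<bar>fs n u\<bar> \<le> B" by blast
      have buv: "b u v > 0" using step by auto
      show ?case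
      proof (intro exI allI)
        fix n
        show "\<bar>fs n v\<bar> \<le> B + ((I + 1) / b u v) powr (1 / p)"
          using B[of n] edge[OF buv, of n] by linarith
      qed
    qed
  qed
  define e where "e = from_nat_into (UNIV :: 'a set)"
  have surj: "\<exists>n. e n = x" for x
    using range_from_nat_into[OF _ cnt] unfolding e_def by (metis UNIV_I UNIV_not_empty imageE)
  interpret ss: subseqs "\<lambda>n r. convergent (\<lambda>i. fs (r i) (e n))"
  proof
    fix n and s :: "nat \<Rightarrow> nat" assume "strict_mono s"
    obtain B where B: "\<And>m. \<bar>fs m (e n)\<bar> \<le> B" using bnd by blast
    have "bounded (range (\<lambda>i. fs (s i) (e n)))"
      unfolding bounded_iff using B by auto
    from bounded_imp_convergent_subsequence[OF this] obtain l r where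
      "strict_mono r" "((\<lambda>i. fs (s i) (e n)) \<circ> r) \<longlonglongrightarrow> l" by blast
    then show "\<exists>r'. strict_mono r' \<and> convergent (\<lambda>i. fs ((s \<circ> r') i) (e n))"
      by (intro exI[of _ r]) (auto simp: convergent_def o_def)
  qed
  define r where "r = ss.diagseq"
  have r_mono: "strict_mono r" unfolding r_def by (rule ss.subseq_diagseq)
  have conv: "convergent (\<lambda>i. fs (r i) x)" for x
  proof -
    obtain n where n: "e n = x" using surj by blast
    have "convergent (\<lambda>i. fs ((ss.diagseq \<circ> (+) (Suc n)) i) (e n))"
    proof (rule ss.diagseq_holds)
      fix r' s :: "nat \<Rightarrow> nat" and m
      assume "strict_mono r'" "convergent (\<lambda>i. fs (s i) (e m))"
      then show "convergent (\<lambda>i. fs ((s \<circ> r') i) (e m))"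
        using LIMSEQ_subseq_LIMSEQ[of "\<lambda>i. fs (s i) (e m)" _ r'] by (auto simp: convergent_def o_def)
    qed
    then obtain l where "(\<lambda>i. fs (r (i + Suc n)) (e n)) \<longlonglongrightarrow> l"
      by (auto simp: convergent_def o_def r_def add.commute)
    then have "(\<lambda>i. fs (r i) (e n)) \<longlonglongrightarrow> l" by (rule LIMSEQ_offset)
    then show ?thesis using n by (auto simp: convergent_def)
  qed
  define \<kappa> where "\<kappa> x = lim (\<lambda>i. fs (r i) x)" for x
  have lim: "(\<lambda>i. fs (r i) x) \<longlonglongrightarrow> \<kappa> x" for x
    using conv[of x] unfolding \<kappa>_def by (simp add: convergent_LIMSEQ_iff)
  have kK: "\<kappa> x = 0" if "x \<in> K" for x
  proof -
    have "(\<lambda>i. fs (r i) x) = (\<lambda>i. 0)" using fsC that by (auto simp: C_def)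
    then show ?thesis using lim[of x] LIMSEQ_unique[OF _ tendsto_const] by metis
  qed
  have kpsi: "\<psi> x \<le> \<kappa> x" for x
    by (rule LIMSEQ_le_const[OF lim]) (use fsC in \<open>auto simp: C_def\<close>)
  have partial: "sum (h \<kappa>) P \<le> I" if P: "finite P" for P
  proof -
    have t1: "(\<lambda>i. sum (h (fs (r i))) P) \<longlonglongrightarrow> sum (h \<kappa>) P"
    proof (intro tendsto_sum)
      fix z :: "'a \<times> 'a"
      obtain u v where z: "z = (u, v)" by (cases z)
      have "(\<lambda>i. b u v * \<bar>fs (r i) u - fs (r i) v\<bar> powr p) \<longlonglongrightarrow> b u v * \<bar>\<kappa> u - \<kappa> v\<bar> powr p"
        using p_gt by (intro tendsto_intros lim) auto
      then show "(\<lambda>i. h (fs (r i)) z) \<longlonglongrightarrow> h \<kappa> z" by (simp add: z h_apply)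
    qed
    have t2: "(\<lambda>i. I + inverse (real (Suc i))) \<longlonglongrightarrow> I + 0"
      by (intro tendsto_add tendsto_const LIMSEQ_inverse_real_of_nat)
    have le: "sum (h (fs (r i))) P \<le> I + inverse (real (Suc i))" for i
    proof -
      have "sum (h (fs (r i))) P \<le> \<Phi> (fs (r i))"
        unfolding \<Phi>_def using P fsS by (intro finite_sum_le_infsum) (auto intro: h_nonneg)
      also have "\<dots> < I + 1 / real (Suc (r i))" by (rule fsI)
      also have "1 / real (Suc (r i)) \<le> inverse (real (Suc i))"
        using seq_suble[OF r_mono, of i] by (simp add: divide_simps)
      finally show ?thesis by simp
    qed
    have "sum (h \<kappa>) P \<le> I + 0" by (rule LIMSEQ_le[OF t1 t2]) (use le in auto)
    then show ?thesis by simp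
  qed
  have ks: "h \<kappa> summable_on UNIV"
    by (rule nonneg_bdd_above_summable_on) (use partial h_nonneg in \<open>auto simp: bdd_above_def\<close>)
  have kI: "\<Phi> \<kappa> \<le> I" unfolding \<Phi>_def by (rule infsum_le_finite_sums[OF ks partial]) auto
  have kC: "\<kappa> \<in> C" using kK kpsi ks by (simp add: C_def)
  show ?thesis
  proof (intro bexI[OF _ kC] ballI)
    fix g assume "g \<in> C"
    then have "I \<le> \<Phi> g" unfolding I_def by (intro cInf_lower bdd) auto
    then show "infsum (h \<kappa>) UNIV \<le> infsum (h g) UNIV" using kI unfolding \<Phi>_def by simp
  qed
qed

end



theorem theorem3p27:
  fixes b :: "'a \<Rightarrow> 'a \<Rightarrow> real" and m c :: "'a \<Rightarrow> real" and p :: real and K :: "'a set"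
  assumes "weighted_graph b m c"
    and "\<forall>x. c x = 0"
    and "p > 1"
    and "p_parabolic b c p"
    and "finite K" and "K \<noteq> {}"
  shows "\<exists>\<kappa> :: 'a \<Rightarrow> real. (\<forall>x. \<kappa> x \<ge> 0) \<and>
           in_Dp b c p \<kappa> \<and>
           p_superharmonic_on b m p (UNIV - K) \<kappa> \<and> (\<forall>x\<in>K. \<kappa> x = 0) \<and>
           (\<forall>M>0. \<exists>F. finite F \<and> (\<forall>x\<in>UNIV - F. \<kappa> x > M))"
proof -
  note wg = assms(1)[unfolded weighted_graph_def]
  have c0: "c = (\<lambda>x. 0)" using assms(2) by auto
  interpret egraph b p
    by unfold_locales (use wg assms(3) in auto)
  have en: "energy b c p \<phi> = (1/2) * infsum (h \<phi>) UNIV" for \<phi>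
    by (simp add: energy_def c0)
  have par: "\<exists>\<phi>. finite {x. \<phi> x \<noteq> 0} \<and> (\<forall>x\<in>S. 1 \<le> \<phi> x) \<and> infsum (h \<phi>) UNIV < \<epsilon>"
    if S: "finite S" and eps: "\<epsilon> > 0" for S \<epsilon>
  proof -
    define A where "A = {energy b c p \<phi> | \<phi>. finite {x. \<phi> x \<noteq> 0} \<and> (\<forall>x\<in>S. \<phi> x \<ge> 1)}"
    have cap: "Inf A = 0" using assms(4) S unfolding p_parabolic_def capacity_def A_def by blast
    have "energy b c p (\<lambda>x. if x \<in> S then 1 else 0) \<in> A"
      unfolding A_def using S by (intro CollectI exI[of _ "\<lambda>x. if x \<in> S then 1 else 0"]) (auto elim: finite_subset[rotated])
    then have ne: "A \<noteq> {}" by auto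
    have "Inf A < \<epsilon> / 2" using cap eps by simp
    from cInf_lessD[OF ne this] obtain \<phi> where
      "finite {x. \<phi> x \<noteq> 0}" "\<forall>x\<in>S. 1 \<le> \<phi> x" "energy b c p \<phi> < \<epsilon> / 2"
      unfolding A_def by blast
    then show ?thesis using en by (intro exI[of _ \<phi>]) auto
  qed
  obtain \<psi> where psi: "\<forall>x. 0 \<le> \<psi> x" "\<forall>x\<in>K. \<psi> x = 0" "h \<psi> summable_on UNIV"
    "\<forall>M. \<exists>F. finite F \<and> (\<forall>x. x \<notin> F \<longrightarrow> M < \<psi> x)"
    using psi_exists[OF par _ assms(5)] wg by blast
  obtain k0 where k0: "k0 \<in> K" using assms(6) by blast
  define C where "C = {f. (\<forall>x\<in>K. f x = 0) \<and> (\<forall>x. \<psi> x \<le> f x) \<and> h f summable_on UNIV}"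
  have conn: "\<And>x y. (x, y) \<in> {(u, v). b u v > 0}\<^sup>*" using wg by blast
  have cnt: "countable (UNIV :: 'a set)" using wg by blast
  have "\<exists>\<kappa>\<in>C. \<forall>g\<in>C. infsum (h \<kappa>) UNIV \<le> infsum (h g) UNIV"
    unfolding C_def by (rule minimizer[OF conn k0 cnt psi(3) psi(2)])
  then obtain \<kappa> where kC: "\<kappa> \<in> C" and kmin: "\<And>g. g \<in> C \<Longrightarrow> infsum (h \<kappa>) UNIV \<le> infsum (h g) UNIV"
    by blast
  have kK: "\<forall>x\<in>K. \<kappa> x = 0" and kpsi: "\<And>x. \<psi> x \<le> \<kappa> x" and ks: "h \<kappa> summable_on UNIV"
    using kC by (auto simp: C_def)
  show ?thesis
  proof (intro exI[of _ \<kappa>] conjI allI impI)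
    fix x show "0 \<le> \<kappa> x" using psi(1) kpsi[of x] by (meson order_trans)
  next
    show "in_Dp b c p \<kappa>" unfolding in_Dp_def using ks by (simp add: c0)
  next
    show "\<forall>x\<in>K. \<kappa> x = 0" by (rule kK)
  next
    fix M :: real assume "M > 0"
    obtain F where "finite F" "\<forall>x. x \<notin> F \<longrightarrow> M < \<psi> x" using psi(4) by blast
    then show "\<exists>F. finite F \<and> (\<forall>x\<in>UNIV - F. M < \<kappa> x)"
      using kpsi by (intro exI[of _ F]) (auto intro: less_le_trans)
  next
    have sh: "(\<lambda>y. b x y * \<bar>\<kappa> x - \<kappa> y\<bar> powr (p - 1)) summable_on UNIV \<and>
              infsum (\<lambda>y. b x y * spow p (\<kappa> x - \<kappa> y)) UNIV \<ge> 0" if x: "x \<notin> K" for x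
    proof -
      have "infsum (h \<kappa>) UNIV \<le> infsum (h (\<kappa>(x := \<kappa> x + t))) UNIV" if t: "0 < t" "t \<le> 1" for t
      proof (rule kmin)
        have "\<psi> x \<le> \<kappa> x + t" using kpsi[of x] t by linarith
        then show "\<kappa>(x := \<kappa> x + t) \<in> C"
          using kK kpsi x variation(1)[OF ks t, of x] by (auto simp: C_def)
      qed
      then show ?thesis using superharm_of_min[OF ks, of x] by blast
    qed
    show "p_superharmonic_on b m p (UNIV - K) \<kappa>"
      unfolding p_superharmonic_on_def in_Fp_def p_laplacian_def
    proof (intro conjI ballI)
      fix x assume "x \<in> UNIV - K"
      then show "(\<lambda>y. b x y * \<bar>\<kappa> x - \<kappa> y\<bar> powr (p - 1)) summable_on UNIV" using sh by auto
    next
      fix x assume "x \<in> UNIV - K"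
      then have "infsum (\<lambda>y. b x y * spow p (\<kappa> x - \<kappa> y)) UNIV \<ge> 0" using sh by auto
      moreover have "m x > 0" using wg by auto
      ultimately show "0 \<le> 1 / m x * infsum (\<lambda>y. b x y * spow p (\<kappa> x - \<kappa> y)) UNIV" by simp
    qed
  qed
qed


end
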